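(* Let $\mathcal T\ge2$, $\mathcal S\ge\max\{2\mathcal T,6\}$, and $(t,x)\in\mathbb R\times\mathbb R^3$ with $|t-|x||\le1$ and $|x|\ge\max\{12,\mathcal T,2\mathcal S\}$. Then $$\int_{|x-y|\le t+\mathcal T}\frac{dy}{|x-y||y|^4}\mathbf 1_{\{|y|\ge\frac12(1+|t-|x-y||)\}}\le C(1+\mathcal T)\frac{1}{|x|},$$ with $C$ an absolute constant. *)

theory Defs
  imports "HOL-Analysis.Analysis"
begin

end

theory Submission
  imports Defs "HOL-Analysis.Analysis"
begin

lemma cball_sum_bound:
  fixes c :: "real^3" and a \<rho> :: "nat \<Rightarrow> real" and f :: "real^3 \<Rightarrow> ennreal"
  assumes a: "\<And>k. a k \<ge> 0" and r: "\<And>k. \<rho> k \<ge> 0" and s: "(\<lambda>k. a k * \<rho> k ^ 3) sums s"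
  and fb: "\<And>y. f y \<le> (\<Sum>k. ennreal (a k * indicator (cball c (\<rho> k)) y))"
  shows "(\<integral>\<^sup>+ y. f y \<partial>lborel) \<le> ennreal (unit_ball_vol 3 * s)"
proof -
  have "(\<integral>\<^sup>+ y. f y \<partial>lborel) \<le> (\<integral>\<^sup>+ y. (\<Sum>k. ennreal (a k * indicator (cball c (\<rho> k)) y)) \<partial>lborel)"
    by (intro nn_integral_mono fb)
  also have "\<dots> = (\<Sum>k. \<integral>\<^sup>+ y. ennreal (a k * indicator (cball c (\<rho> k)) y) \<partial>lborel)"
    by (rule nn_integral_suminf) (intro measurable_compose[OF _ measurable_ennreal] borel_measurable_times borel_measurable_const borel_measurable_indicator borel_closed, simp)
  also have "\<dots> = (\<Sum>k. ennreal (unit_ball_vol 3 * (a k * \<rho> k ^ 3)))"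
  proof (rule suminf_cong)
    fix k
    have "(\<integral>\<^sup>+ y. ennreal (a k * indicator (cball c (\<rho> k)) y) \<partial>lborel)
        = (\<integral>\<^sup>+ y. ennreal (a k) * indicator (cball c (\<rho> k)) y \<partial>lborel)"
      by (intro nn_integral_cong) (simp add: indicator_def)
    also have "\<dots> = ennreal (a k) * emeasure lborel (cball c (\<rho> k))"
      by (rule nn_integral_cmult_indicator) simp
    also have "\<dots> = ennreal (unit_ball_vol 3 * (a k * \<rho> k ^ 3))"
      using r[of k] a[of k] by (simp add: emeasure_cball ennreal_mult'[symmetric] mult_ac)
    finally show "(\<integral>\<^sup>+ y. ennreal (a k * indicator (cball c (\<rho> k)) y) \<partial>lborel) = ennreal (unit_ball_vol 3 * (a k * \<rho> k ^ 3))" .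
  qed
  also have "\<dots> = ennreal (unit_ball_vol 3 * s)"
    by (rule suminf_ennreal_eq) (use a r in \<open>auto intro!: sums_mult s mult_nonneg_nonneg unit_ball_vol_nonneg\<close>)
  finally show ?thesis .
qed

lemma ennreal_le_suminf_term:
  fixes g :: "nat \<Rightarrow> ennreal"
  shows "g k \<le> (\<Sum>k. g k)"
  using sum_le_suminf[OF summableI, of "{k}" g] by simp

lemma near_point:
  fixes x y :: "real^3" and R :: real
  assumes R: "R > 0"
  shows "ennreal (indicator {y. norm (x-y) \<le> R} y / norm (x-y))
     \<le> (\<Sum>k. ennreal (2^(k+1)/R * indicator (cball x (R/2^k)) y))"
proof (cases "norm (x-y) \<le> R \<and> x \<noteq> y")
  case False
  then show ?thesis by (auto simp: indicator_def)
next
  case True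
  define z where "z = norm (x-y)"
  have z: "z > 0" "z \<le> R" using True by (auto simp: z_def)
  have ex: "\<exists>n. R * (1/2)^n < z"
  proof -
    obtain n where "(1/2::real)^n < z / R" using real_arch_pow_inv[of "z/R" "1/2"] z R by auto
    then show ?thesis using R by (auto simp: field_simps)
  qed
  define n where "n = (LEAST n. R * (1/2)^n < z)"
  have n1: "R * (1/2)^n < z" unfolding n_def by (rule LeastI_ex[OF ex])
  have n0: "n \<noteq> 0" using n1 z by (cases "n = 0") auto
  then obtain k where k: "n = Suc k" by (cases n) auto
  have "\<not> R * (1/2)^k < z" using k unfolding n_def
    by (metis Least_le lessI not_less_Least)
  hence k1: "z \<le> R / 2^k" by (simp add: field_simps power_one_over)
  have k2: "R / 2^(k+1) < z" using n1 k by (simp add: field_simps power_one_over)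
  have "indicator {y. norm (x-y) \<le> R} y / norm (x-y) = 1 / z"
    using z by (simp add: z_def indicator_def)
  also have "\<dots> \<le> 2^(k+1)/R" using k2 z R by (simp add: field_simps)
  also have "\<dots> = 2^(k+1)/R * indicator (cball x (R/2^k)) y"
    using k1 by (simp add: z_def dist_norm indicator_def)
  finally have "ennreal (indicator {y. norm (x-y) \<le> R} y / norm (x-y)) \<le> ennreal (2^(k+1)/R * indicator (cball x (R/2^k)) y)"
    by (rule ennreal_leI)
  also have "\<dots> \<le> (\<Sum>k. ennreal (2^(k+1)/R * indicator (cball x (R/2^k)) y))"
    by (rule ennreal_le_suminf_term)
  finally show ?thesis .
qed

lemma near_integral:
  fixes x :: "real^3" and R :: real
  assumes R: "R > 0"
  shows "(\<integral>\<^sup>+ y. ennreal (indicator {y. norm (x-y) \<le> R} y / norm (x-y)) \<partial>lborel)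
     \<le> ennreal (unit_ball_vol 3 * (8/3 * R^2))"
proof (rule cball_sum_bound[where a = "\<lambda>k. 2^(k+1)/R" and \<rho> = "\<lambda>k. R/2^k" and c = x])
  show "\<And>k. 0 \<le> 2^(k+1)/R" using R by simp
  show "\<And>k. 0 \<le> R/2^k" using R by simp
  have eq: "(\<lambda>k. 2^(k+1)/R * (R/2^k)^3) = (\<lambda>k. (2*R^2) * (1/4)^k)"
  proof
    fix k :: nat
    have a: "(1/4::real)^k = 1/(2^k*2^k)"
      by (simp add: power_one_over flip: power_mult_distrib)
    have b: "(R/2^k)^3 = R^3/(2^k*2^k*2^k)" by (simp add: power_divide power3_eq_cube)
    show "2^(k+1)/R * (R/2^k)^3 = (2*R^2) * (1/4)^k"
      unfolding a b using R by (simp add: field_simps power2_eq_square power3_eq_cube)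
  qed
  have "(\<lambda>k. (2*R^2) * (1/4::real)^k) sums ((2*R^2) * (1 / (1 - 1/4)))"
    by (intro sums_mult geometric_sums) simp
  then show "(\<lambda>k. 2^(k+1)/R * (R/2^k)^3) sums (8/3 * R^2)"
    unfolding eq by simp
  show "\<And>y. ennreal (indicator {y. norm (x-y) \<le> R} y / norm (x-y))
     \<le> (\<Sum>k. ennreal (2^(k+1)/R * indicator (cball x (R/2^k)) y))"
    by (rule near_point[OF R])
qed

lemma far_point:
  fixes y :: "real^3"
  shows "ennreal (indicator {y. norm y \<ge> 1/2} y / norm y ^ 4)
     \<le> (\<Sum>k. ennreal (16/16^k * indicator (cball 0 (2^k)) y))"
proof (cases "norm y \<ge> 1/2")
  case False
  then show ?thesis by (auto simp: indicator_def)
next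
  case True
  define z where "z = norm y"
  have z: "z \<ge> 1/2" using True by (simp add: z_def)
  have ex: "\<exists>n. z \<le> 2^n"
    using real_arch_pow[of 2 z] by (auto intro: less_imp_le)
  define n where "n = (LEAST n. z \<le> (2::real)^n)"
  have n1: "z \<le> 2^n" unfolding n_def by (rule LeastI_ex[OF ex])
  have low: "16^n \<le> 16 * z^4"
  proof (cases n)
    case 0
    have "(1/2::real)^4 \<le> z^4" using z by (intro power_mono) auto
    then show ?thesis using 0 by (simp add: power_divide)
  next
    case (Suc k)
    have "\<not> z \<le> 2^k" using Suc unfolding n_def
      by (metis Least_le lessI not_less_Least)
    hence "(2::real)^k \<le> z" by simp
    hence "((2::real)^k)^4 \<le> z^4" by (intro power_mono) auto
    moreover have "((2::real)^k)^4 = 16^k"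
      by (simp add: power4_eq_xxxx flip: power_mult_distrib)
    ultimately show ?thesis using Suc by simp
  qed
  have zp: "z > 0" using z by simp
  have "indicator {y. norm y \<ge> 1/2} y / norm y ^ 4 = 1 / z^4"
    using z by (simp add: z_def indicator_def)
  also have "\<dots> \<le> 16/16^n" using low zp by (simp add: field_simps)
  also have "\<dots> = 16/16^n * indicator (cball 0 (2^n)) y"
    using n1 by (simp add: z_def indicator_def)
  finally have "ennreal (indicator {y. norm y \<ge> 1/2} y / norm y ^ 4) \<le> ennreal (16/16^n * indicator (cball 0 (2^n)) y)"
    by (rule ennreal_leI)
  also have "\<dots> \<le> (\<Sum>k. ennreal (16/16^k * indicator (cball 0 (2^k)) y))"
    by (rule ennreal_le_suminf_term)
  finally show ?thesis .
qed

lemma far_integral: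
  shows "(\<integral>\<^sup>+ y. ennreal (indicator {y::real^3. norm y \<ge> 1/2} y / norm y ^ 4) \<partial>lborel)
     \<le> ennreal (unit_ball_vol 3 * 32)"
proof (rule cball_sum_bound[where a = "\<lambda>k. 16/16^k" and \<rho> = "\<lambda>k. 2^k" and c = 0])
  show "\<And>k. 0 \<le> 16/(16::real)^k" by simp
  show "\<And>k. 0 \<le> (2::real)^k" by simp
  have eq: "(\<lambda>k. 16/16^k * (2^k)^3) = (\<lambda>k. 16 * (1/2::real)^k)"
  proof
    fix k :: nat
    have a: "(16::real)^k = 2^k*2^k*2^k*2^k"
      by (simp flip: power_mult_distrib)
    show "16/16^k * (2^k)^3 = 16 * (1/2::real)^k"
      unfolding a by (simp add: field_simps power3_eq_cube power_one_over)
  qed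
  have "(\<lambda>k. 16 * (1/2::real)^k) sums (16 * (1 / (1 - 1/2)))"
    by (intro sums_mult geometric_sums) simp
  then show "(\<lambda>k. 16/16^k * (2^k)^3) sums (32::real)"
    unfolding eq by simp
  show "\<And>y. ennreal (indicator {y::real^3. norm y \<ge> 1/2} y / norm y ^ 4)
     \<le> (\<Sum>k. ennreal (16/16^k * indicator (cball 0 (2^k)) y))"
    by (rule far_point)
qed

lemma main_point:
  fixes x y :: "real^3" and t T :: real
  assumes T: "T \<ge> 0" and t: "\<bar>t - norm x\<bar> \<le> 1" and x12: "norm x \<ge> 12" and xT: "norm x \<ge> T"
  shows "indicator {y. norm (x - y) \<le> t + T \<and> norm y \<ge> (1 + \<bar>t - norm (x - y)\<bar>) / 2} y
            / (norm (x - y) * norm y ^ 4)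
     \<le> 2 / norm x * (indicator {y. norm y \<ge> 1/2} y / norm y ^ 4)
       + 256 / norm x ^ 4 * (indicator {y. norm (x-y) \<le> 3 * norm x} y / norm (x-y))"
    (is "?L \<le> ?R1 + ?R2")
proof -
  define r where "r = norm x"
  define d where "d = norm (x - y)"
  define n where "n = norm y"
  have r12: "r \<ge> 12" using x12 by (simp add: r_def)
  have R1: "?R1 \<ge> 0" and R2: "?R2 \<ge> 0" by auto
  show ?thesis
  proof (cases "norm (x - y) \<le> t + T \<and> norm y \<ge> (1 + \<bar>t - norm (x - y)\<bar>) / 2 \<and> d > 0")
    case False
    have "d \<ge> 0" by (simp add: d_def)
    with False have "?L = 0 \<or> d = 0" by (auto simp: indicator_def)
    moreover have "d = 0 \<Longrightarrow> ?L = 0" by (simp add: d_def)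
    ultimately have "?L = 0" by auto
    then show ?thesis using R1 R2 by linarith
  next
    case True
    have n2: "n \<ge> 1/2" proof -
      have "(1 + \<bar>t - norm (x - y)\<bar>) / 2 \<le> norm y" using True by blast
      moreover have "1/2 \<le> (1 + \<bar>t - norm (x - y)\<bar>) / (2::real)" by (intro divide_right_mono) auto
      ultimately show ?thesis unfolding n_def by linarith
    qed
    have d0: "d > 0" using True by simp
    have tr: "t \<le> r + 1" using t by (simp add: abs_le_iff r_def)
    have "d \<le> t + T" using True by (simp add: d_def)
    hence d3: "d \<le> 3 * r" using tr xT r12 unfolding r_def by linarith
    have L: "?L = 1 / (d * n^4)" using True by (simp add: d_def n_def)
    have n4: "n^4 > 0" using n2 by simp
    have tri: "r \<le> d + n" unfolding r_def d_def n_def using norm_triangle_ineq[of "x - y" y] by simp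
    show ?thesis
    proof (cases "n < r/4")
      case True
      have "d \<ge> r/2" using tri True r12 by simp
      hence "1/d \<le> 2/r" using d0 r12 by (simp add: field_simps)
      hence "1/d * (1/n^4) \<le> 2/r * (1/n^4)" using n4 by (intro mult_right_mono) auto
      moreover have "?R1 = 2/r * (1/n^4)" using n2 by (simp add: r_def n_def)
      ultimately have "?L \<le> ?R1" using L by simp
      then show ?thesis using R2 by linarith
    next
      case False
      have "(r/4)^4 \<le> n^4" using False r12 by (intro power_mono) auto
      hence "r^4/256 \<le> n^4" by (simp add: power_divide)
      hence "1/n^4 \<le> 256/r^4" using n4 r12 by (simp add: field_simps)
      hence "1/n^4 * (1/d) \<le> 256/r^4 * (1/d)" using d0 by (intro mult_right_mono) auto
      moreover have "?R2 = 256/r^4 * (1/d)" using d3 by (simp add: r_def d_def)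
      ultimately have "?L \<le> ?R2" using L by (simp add: mult.commute)
      then show ?thesis using R1 by linarith
    qed
  qed
qed

theorem lemmaE11:
  shows "\<exists>C::real. \<forall>(T::real) (S::real) (t::real) (x::real^3).
    T \<ge> 2 \<longrightarrow> S \<ge> max (2*T) 6 \<longrightarrow> \<bar>t - norm x\<bar> \<le> 1 \<longrightarrow>
    norm x \<ge> max 12 (max T (2*S)) \<longrightarrow>
    (\<integral>\<^sup>+ y. ennreal (indicator {y. norm (x - y) \<le> t + T \<and>
                         norm y \<ge> (1 + \<bar>t - norm (x - y)\<bar>) / 2} y
                    / (norm (x - y) * norm y ^ 4)) \<partial>lborel)
      \<le> ennreal (C * (1 + T) / norm x)"
proof (intro exI allI impI)
  fix T S t :: real and x :: "real^3"
  assume T2: "T \<ge> 2" and S: "S \<ge> max (2*T) 6" and t: "\<bar>t - norm x\<bar> \<le> 1"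
    and xb: "norm x \<ge> max 12 (max T (2*S))"
  define V where "V = unit_ball_vol 3"
  define r where "r = norm x"
  have V0: "V \<ge> 0" unfolding V_def by (rule unit_ball_vol_nonneg) simp
  have r12: "r \<ge> 12" and rT: "r \<ge> T" using xb by (auto simp: r_def)
  define h1 where "h1 = (\<lambda>y::real^3. indicator {y. norm y \<ge> 1/2} y / norm y ^ 4)"
  define h2 where "h2 = (\<lambda>y::real^3. indicator {y. norm (x-y) \<le> 3 * r} y / norm (x-y))"
  have h1m: "(\<lambda>y. ennreal (h1 y)) \<in> borel_measurable lborel" unfolding h1_def by measurable
  have h2m: "(\<lambda>y. ennreal (h2 y)) \<in> borel_measurable lborel" unfolding h2_def by measurable
  have h1n: "\<And>y. h1 y \<ge> 0" and h2n: "\<And>y. h2 y \<ge> 0" unfolding h1_def h2_def by auto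
  have I1: "(\<integral>\<^sup>+ y. ennreal (h1 y) \<partial>lborel) \<le> ennreal (V * 32)"
    unfolding h1_def V_def by (rule far_integral)
  have I2: "(\<integral>\<^sup>+ y. ennreal (h2 y) \<partial>lborel) \<le> ennreal (V * (8/3 * (3*r)^2))"
    unfolding h2_def V_def by (rule near_integral) (use r12 in simp)
  have "(\<integral>\<^sup>+ y. ennreal (indicator {y. norm (x - y) \<le> t + T \<and>
                         norm y \<ge> (1 + \<bar>t - norm (x - y)\<bar>) / 2} y
                    / (norm (x - y) * norm y ^ 4)) \<partial>lborel)
      \<le> (\<integral>\<^sup>+ y. ennreal (2/r) * ennreal (h1 y) + ennreal (256/r^4) * ennreal (h2 y) \<partial>lborel)"
  proof (rule nn_integral_mono)
    fix y :: "real^3"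
    have "indicator {y. norm (x - y) \<le> t + T \<and> norm y \<ge> (1 + \<bar>t - norm (x - y)\<bar>) / 2} y
            / (norm (x - y) * norm y ^ 4) \<le> 2/r * h1 y + 256/r^4 * h2 y"
      unfolding h1_def h2_def r_def
      by (rule main_point) (use T2 t xb in auto)
    then have "ennreal (indicator {y. norm (x - y) \<le> t + T \<and> norm y \<ge> (1 + \<bar>t - norm (x - y)\<bar>) / 2} y
            / (norm (x - y) * norm y ^ 4)) \<le> ennreal (2/r * h1 y + 256/r^4 * h2 y)"
      by (rule ennreal_leI)
    also have "\<dots> = ennreal (2/r) * ennreal (h1 y) + ennreal (256/r^4) * ennreal (h2 y)"
      using h1n[of y] h2n[of y] r12 by (simp add: ennreal_plus flip: ennreal_mult)
    finally show "ennreal (indicator {y. norm (x - y) \<le> t + T \<and> norm y \<ge> (1 + \<bar>t - norm (x - y)\<bar>) / 2} y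
            / (norm (x - y) * norm y ^ 4)) \<le> ennreal (2/r) * ennreal (h1 y) + ennreal (256/r^4) * ennreal (h2 y)" .
  qed
  also have "\<dots> = ennreal (2/r) * (\<integral>\<^sup>+ y. ennreal (h1 y) \<partial>lborel) + ennreal (256/r^4) * (\<integral>\<^sup>+ y. ennreal (h2 y) \<partial>lborel)"
    using h1m h2m by (simp add: nn_integral_add nn_integral_cmult)
  also have "\<dots> \<le> ennreal (2/r) * ennreal (V * 32) + ennreal (256/r^4) * ennreal (V * (8/3 * (3*r)^2))"
    by (intro add_mono mult_left_mono I1 I2) auto
  also have "\<dots> = ennreal (2/r * (V * 32) + 256/r^4 * (V * (8/3 * (3*r)^2)))"
    using r12 V0 by (simp add: ennreal_plus flip: ennreal_mult)
  also have "\<dots> \<le> ennreal ((576 * V) * (1 + T) / norm x)"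
  proof (rule ennreal_leI)
    have e: "256/r^4 * (V * (8/3 * (3*r)^2)) = 6144 * V / r^2"
      using r12 by (simp add: field_simps power2_eq_square power4_eq_xxxx)
    have "6144 * V / r^2 \<le> 512 * V / r"
      using r12 V0 by (simp add: field_simps power2_eq_square mult_left_mono)
    hence "2/r * (V * 32) + 256/r^4 * (V * (8/3 * (3*r)^2)) \<le> 576 * V / r"
    proof -
      have "2/r * (V * 32) = 64 * V / r" by simp
      moreover have "576 * V / r = 64 * V / r + 512 * V / r" by (simp add: add_divide_distrib)
      ultimately show ?thesis unfolding e using \<open>6144 * V / r^2 \<le> 512 * V / r\<close> by linarith
    qed
    also have "\<dots> \<le> 576 * V * (1 + T) / r"
      using r12 V0 T2 by (intro divide_right_mono) (auto simp: mult_le_cancel_left1)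
    finally show "2/r * (V * 32) + 256/r^4 * (V * (8/3 * (3*r)^2)) \<le> (576 * V) * (1 + T) / norm x"
      by (simp add: r_def)
  qed
  finally show "(\<integral>\<^sup>+ y. ennreal (indicator {y. norm (x - y) \<le> t + T \<and>
                         norm y \<ge> (1 + \<bar>t - norm (x - y)\<bar>) / 2} y
                    / (norm (x - y) * norm y ^ 4)) \<partial>lborel)
      \<le> ennreal ((576 * unit_ball_vol 3) * (1 + T) / norm x)" by (simp add: V_def)
qed

end
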